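(* Let $n$ be a nonnegative integer and let $a,b,c\in\mathbb{C}$ be such that all hypergeometric series and quotients below are defined (no lower parameter is zero or a negative integer). Then \[ {}_4F_3\!\left(\left.{-n,a,a-c-n,c \atop \frac{a-n}{2},\frac{1+a-n}{2},b}\right| \frac{1}{4}\right) =\frac{(1+c-a)_n(b-c)_n}{(1-a)_n(b)_n}\, {}_4F_3\!\left(\left.{-n,1+c-b,1-b-n,c \atop \frac{1+c-b-n}{2},\frac{2+c-b-n}{2},1+c-a}\right| \frac{1}{4}\right). \]
   Context: For $a\in\mathbb{C}$, $(a)_0=1$ and $(a)_k=a(a+1)\cdots(a+k-1)$ for $k\ge1$. The hypergeometric series is ${}_rF_s\!\left(\left.{\alpha_1,\ldots,\alpha_r\atop \beta_1,\ldots,\beta_s}\right|z\right)=\sum_{k\ge0}\frac{(\alpha_1)_k\cdots(\alpha_r)_k}{k!(\beta_1)_k\cdots(\beta_s)_k}z^k$, with no lower parameter zero or a negative integer; when an upper parameter is $-n$ it is a finite sum over $0\le k\le n$. *)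

theory Defs
  imports Complex_Main
begin

definition hyp_term :: "complex list \<Rightarrow> complex list \<Rightarrow> complex \<Rightarrow> nat \<Rightarrow> complex" where
  "hyp_term as bs z k =
     (\<Prod>a\<leftarrow>as. pochhammer a k) / (fact k * (\<Prod>b\<leftarrow>bs. pochhammer b k)) * z ^ k"

definition hypergeom :: "complex list \<Rightarrow> complex list \<Rightarrow> complex \<Rightarrow> complex" where
  "hypergeom as bs z = (\<Sum>k. hyp_term as bs z k)"

definition admissible_lower :: "complex \<Rightarrow> bool" where
  "admissible_lower b \<longleftrightarrow> (\<forall>m::nat. b \<noteq> - of_nat m)"

end

theory Submission
  imports Defs "HOL-Computational_Algebra.Formal_Power_Series"
begin

lemma K0:
  fixes a c :: complex
  assumes "k \<le> n"
  shows "pochhammer a k * pochhammer (a - c - of_nat n) k * pochhammer (1 - a) n * pochhammer (1 + c - a) (n - k)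
       = pochhammer (1 + c - a) n * pochhammer (a - of_nat n) (2 * k) * pochhammer (1 - a - of_nat k) (n - k)"
proof -
  have nk: "of_nat (n - k) = (of_nat n - of_nat k :: complex)" using assms by simp
  have h1: "pochhammer (1 + c - a) n = pochhammer (1 + c - a) (n - k) * pochhammer (1 + c - a + of_nat (n - k)) k"
    using pochhammer_product[of "n - k" n "1 + c - a"] assms by simp
  have h2: "pochhammer (1 + c - a + of_nat (n - k)) k = (-1) ^ k * pochhammer (a - c - of_nat n) k"
  proof -
    have "pochhammer (- (a - c - of_nat n + of_nat k - 1)) k = (-1) ^ k * pochhammer ((a - c - of_nat n + of_nat k - 1) - of_nat k + 1) k"
      by (rule pochhammer_minus)
    moreover have "- (a - c - of_nat n + of_nat k - 1) = 1 + c - a + of_nat (n - k)" using nk by simp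
    moreover have "(a - c - of_nat n + of_nat k - 1) - of_nat k + 1 = a - c - of_nat n" by simp
    ultimately show ?thesis by (simp only:)
  qed
  have h3: "pochhammer (1 - a - of_nat k) (k + n) = pochhammer (1 - a - of_nat k) k * pochhammer (1 - a) n"
    using pochhammer_product'[of "1 - a - of_nat k" k n] by simp
  have h4: "pochhammer (1 - a - of_nat k) (k + n) = pochhammer (1 - a - of_nat k) (n - k) * pochhammer (1 - a - of_nat k + of_nat (n - k)) (2 * k)"
    using pochhammer_product'[of "1 - a - of_nat k" "n - k" "2 * k"] assms by (simp add: add.commute)
  have h5: "pochhammer (1 - a - of_nat k) k = (-1) ^ k * pochhammer a k"
  proof -
    have "pochhammer (- (a + of_nat k - 1)) k = (-1) ^ k * pochhammer ((a + of_nat k - 1) - of_nat k + 1) k"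
      by (rule pochhammer_minus)
    then show ?thesis by (simp add: algebra_simps)
  qed
  have h6: "pochhammer (1 - a - of_nat k + of_nat (n - k)) (2 * k) = pochhammer (a - of_nat n) (2 * k)"
  proof -
    have "pochhammer (- (a - of_nat n + of_nat (2 * k) - 1)) (2 * k) = (-1) ^ (2 * k) * pochhammer ((a - of_nat n + of_nat (2 * k) - 1) - of_nat (2 * k) + 1) (2 * k)"
      by (rule pochhammer_minus)
    moreover have "- (a - of_nat n + of_nat (2 * k) - 1) = 1 - a - of_nat k + of_nat (n - k)" using nk by simp
    moreover have "(a - of_nat n + of_nat (2 * k) - 1) - of_nat (2 * k) + 1 = a - of_nat n" by simp
    moreover have "(-1::complex) ^ (2 * k) = 1" by (simp add: power_mult)
    ultimately show ?thesis by (simp only: mult_1)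
  qed
  have Q: "(-1) ^ k * pochhammer a k * pochhammer (1 - a) n = pochhammer (1 - a - of_nat k) (n - k) * pochhammer (a - of_nat n) (2 * k)"
    using h3 h4 h5 h6 by simp
  have s: "((-1::complex) ^ k) * (-1) ^ k = 1" by (simp flip: power_mult_distrib)
  have "pochhammer (1 + c - a) n * pochhammer (a - of_nat n) (2 * k) * pochhammer (1 - a - of_nat k) (n - k)
      = pochhammer (1 + c - a) (n - k) * pochhammer (a - c - of_nat n) k * ((-1) ^ k * (pochhammer (1 - a - of_nat k) (n - k) * pochhammer (a - of_nat n) (2 * k)))"
    unfolding h1 h2 by (simp add: mult_ac)
  also have "\<dots> = pochhammer (1 + c - a) (n - k) * pochhammer (a - c - of_nat n) k * (((-1) ^ k * (-1) ^ k) * pochhammer a k * pochhammer (1 - a) n)"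
    unfolding Q[symmetric] by (simp add: mult_ac)
  finally show ?thesis unfolding s by (simp add: mult_ac)
qed

lemma adm_poch: "admissible_lower x \<Longrightarrow> pochhammer x k \<noteq> 0"
  unfolding admissible_lower_def by (auto simp: pochhammer_eq_0_iff)

lemma K:
  fixes a c :: complex
  assumes "k \<le> n" "admissible_lower (1 + c - a)"
  shows "pochhammer a k * pochhammer (a - c - of_nat n) k * pochhammer (1 - a) n
       = pochhammer (1 + c - a) n * pochhammer (a - of_nat n) (2 * k) *
         (\<Sum>j\<in>{0..n-k}. pochhammer (c + of_nat k) j * pochhammer (- of_nat (n - k)) j /
              (of_nat (fact j) * pochhammer (1 + c - a) j))"
proof -
  have ne: "\<forall>i\<in>{0..<n-k}. 1 + c - a \<noteq> - of_nat i" using assms(2) unfolding admissible_lower_def by auto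
  have V: "(\<Sum>j\<in>{0..n-k}. pochhammer (c + of_nat k) j * pochhammer (- of_nat (n - k)) j /
              (of_nat (fact j) * pochhammer (1 + c - a) j))
        = pochhammer (1 + c - a - (c + of_nat k)) (n - k) / pochhammer (1 + c - a) (n - k)"
    by (rule Vandermonde_pochhammer[OF ne])
  have e: "1 + c - a - (c + of_nat k) = 1 - a - of_nat k" by simp
  have nz: "pochhammer (1 + c - a) (n - k) \<noteq> 0" using adm_poch[OF assms(2)] .
  show ?thesis unfolding V e using K0[OF assms(1), of a c] nz
    by (simp add: field_simps)
qed

lemma dbl:
  fixes x y :: complex
  assumes "y = 1 + x"
  shows "pochhammer (x / 2) k * pochhammer (y / 2) k * 4 ^ k = pochhammer x (2 * k)"
proof -
  have "pochhammer (2 * (x/2)) (2 * k) = of_nat (2^(2*k)) * pochhammer (x/2) k * pochhammer (x/2+1/2) k"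
    by (rule pochhammer_double)
  moreover have "x / 2 + 1 / 2 = y / 2" using assms by (simp add: field_simps)
  moreover have "(of_nat (2^(2*k)) :: complex) = 4 ^ k" by (simp add: power_mult)
  ultimately show ?thesis by (simp add: mult_ac)
qed

lemma E:
  fixes c \<beta> \<gamma> :: complex
  assumes "k \<le> n"
  shows "pochhammer (- of_nat n) k * pochhammer c k / (fact k * pochhammer \<beta> k) *
     (\<Sum>j\<in>{0..n-k}. pochhammer (c + of_nat k) j * pochhammer (- of_nat (n - k)) j /
              (of_nat (fact j) * pochhammer \<gamma> j))
   = (\<Sum>j\<le>n. pochhammer (- of_nat n) (k + j) * pochhammer c (k + j) /
              (fact k * fact j * pochhammer \<beta> k * pochhammer \<gamma> j))"
proof -
  have nk: "- of_nat (n - k) = (- of_nat n + of_nat k :: complex)" using assms by simp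
  have t: "pochhammer (- of_nat n) k * pochhammer c k / (fact k * pochhammer \<beta> k) *
       (pochhammer (c + of_nat k) j * pochhammer (- of_nat (n - k)) j / (of_nat (fact j) * pochhammer \<gamma> j))
     = pochhammer (- of_nat n) (k + j) * pochhammer c (k + j) /
              (fact k * fact j * pochhammer \<beta> k * pochhammer \<gamma> j)" for j
    unfolding pochhammer_product' nk by (simp add: mult_ac)
  have z: "pochhammer (- of_nat n) (k + j) * pochhammer c (k + j) /
              (fact k * fact j * pochhammer \<beta> k * pochhammer \<gamma> j) = (0::complex)"
    if "j \<in> {..n} - {0..n-k}" for j
  proof -
    have "n < k + j" using that by auto
    then show ?thesis by (simp add: pochhammer_of_nat_eq_0_iff)
  qed
  have "(\<Sum>j\<le>n. pochhammer (- of_nat n) (k + j) * pochhammer c (k + j) /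
              (fact k * fact j * pochhammer \<beta> k * pochhammer \<gamma> j))
      = (\<Sum>j\<in>{0..n-k}. pochhammer (- of_nat n) (k + j) * pochhammer c (k + j) /
              (fact k * fact j * pochhammer \<beta> k * pochhammer \<gamma> j))"
    by (rule sum.mono_neutral_right) (use z in auto)
  then show ?thesis by (simp only: sum_distrib_left t)
qed

lemma fin:
  "hypergeom (- of_nat n # as) bs z = (\<Sum>k\<le>n. hyp_term (- of_nat n # as) bs z k)"
  unfolding hypergeom_def
  by (rule suminf_finite) (auto simp: hyp_term_def pochhammer_of_nat_eq_0_iff)


theorem proposition5p1:
  fixes n :: nat and a b c :: complex
  assumes "admissible_lower ((a - of_nat n) / 2)"
    and "admissible_lower ((1 + a - of_nat n) / 2)"
    and "admissible_lower b"
    and "admissible_lower ((1 + c - b - of_nat n) / 2)"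
    and "admissible_lower ((2 + c - b - of_nat n) / 2)"
    and "admissible_lower (1 + c - a)"
    and "pochhammer (1 - a) n \<noteq> 0"
    and "pochhammer b n \<noteq> 0"
  shows "hypergeom [- of_nat n, a, a - c - of_nat n, c]
                   [(a - of_nat n) / 2, (1 + a - of_nat n) / 2, b] (1/4)
       = pochhammer (1 + c - a) n * pochhammer (b - c) n / (pochhammer (1 - a) n * pochhammer b n)
         * hypergeom [- of_nat n, 1 + c - b, 1 - b - of_nat n, c]
                     [(1 + c - b - of_nat n) / 2, (2 + c - b - of_nat n) / 2, 1 + c - a] (1/4)"
proof -
  define g where "g = 1 + c - a"
  define \<alpha> where "\<alpha> = pochhammer g n / pochhammer (1 - a) n"
  define G where "G = (\<lambda>k \<gamma>. (\<Sum>j\<in>{0..n-k}. pochhammer (c + of_nat k) j * pochhammer (- of_nat (n - k)) j /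
              (of_nat (fact j) * pochhammer \<gamma> j)) :: complex)"
  define F where "F = (\<lambda>\<beta> \<gamma> k j. pochhammer (- of_nat n) (k + j) * pochhammer c (k + j) /
              (fact k * fact j * pochhammer \<beta> k * pochhammer \<gamma> j) :: complex)"
  have L: "hyp_term [- of_nat n, a, a - c - of_nat n, c]
                   [(a - of_nat n) / 2, (1 + a - of_nat n) / 2, b] (1/4) k
        = \<alpha> * (\<Sum>j\<le>n. F b g k j)" if "k \<le> n" for k
  proof -
    have n1: "pochhammer ((a - of_nat n) / 2) k \<noteq> 0" by (rule adm_poch[OF assms(1)])
    have n2: "pochhammer ((1 + a - of_nat n) / 2) k \<noteq> 0" by (rule adm_poch[OF assms(2)])
    have n3: "pochhammer b k \<noteq> 0" by (rule adm_poch[OF assms(3)])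
    have D: "pochhammer ((a - of_nat n) / 2) k * pochhammer ((1 + a - of_nat n) / 2) k * 4 ^ k = pochhammer (a - of_nat n) (2 * k)"
      by (rule dbl) simp
    have nD: "pochhammer (a - of_nat n) (2 * k) \<noteq> 0" using n1 n2 D[symmetric] by simp
    have T1: "hyp_term [- of_nat n, a, a - c - of_nat n, c]
                   [(a - of_nat n) / 2, (1 + a - of_nat n) / 2, b] (1/4) k
       = pochhammer (- of_nat n) k * pochhammer c k / (fact k * pochhammer b k) *
         (pochhammer a k * pochhammer (a - c - of_nat n) k / pochhammer (a - of_nat n) (2 * k))"
      unfolding hyp_term_def D[symmetric] using n1 n2 n3
      by (simp add: field_simps power_one_over)
    have KK: "pochhammer a k * pochhammer (a - c - of_nat n) k * pochhammer (1 - a) n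
       = pochhammer g n * pochhammer (a - of_nat n) (2 * k) * G k g"
      unfolding G_def g_def by (rule K[OF that assms(6)])
    have T2: "pochhammer a k * pochhammer (a - c - of_nat n) k / pochhammer (a - of_nat n) (2 * k) = \<alpha> * G k g"
      unfolding \<alpha>_def using KK nD assms(7) by (simp add: field_simps)
    have T3: "pochhammer (- of_nat n) k * pochhammer c k / (fact k * pochhammer b k) * G k g = (\<Sum>j\<le>n. F b g k j)"
      unfolding G_def F_def by (rule E[OF that])
    show ?thesis unfolding T1 T2 T3[symmetric] by (simp add: mult_ac)
  qed
  have R: "pochhammer (1 + c - a) n * pochhammer (b - c) n / (pochhammer (1 - a) n * pochhammer b n) *
           hyp_term [- of_nat n, 1 + c - b, 1 - b - of_nat n, c]
                     [(1 + c - b - of_nat n) / 2, (2 + c - b - of_nat n) / 2, 1 + c - a] (1/4) j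
        = \<alpha> * (\<Sum>k\<le>n. F g b j k)" if "j \<le> n" for j
  proof -
    have n1: "pochhammer ((1 + c - b - of_nat n) / 2) j \<noteq> 0" by (rule adm_poch[OF assms(4)])
    have n2: "pochhammer ((2 + c - b - of_nat n) / 2) j \<noteq> 0" by (rule adm_poch[OF assms(5)])
    have n3: "pochhammer g j \<noteq> 0" unfolding g_def by (rule adm_poch[OF assms(6)])
    have D: "pochhammer ((1 + c - b - of_nat n) / 2) j * pochhammer ((2 + c - b - of_nat n) / 2) j * 4 ^ j = pochhammer (1 + c - b - of_nat n) (2 * j)"
      by (rule dbl) simp
    have nD: "pochhammer (1 + c - b - of_nat n) (2 * j) \<noteq> 0" using n1 n2 D[symmetric] by simp
    have T1: "hyp_term [- of_nat n, 1 + c - b, 1 - b - of_nat n, c]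
                     [(1 + c - b - of_nat n) / 2, (2 + c - b - of_nat n) / 2, g] (1/4) j
       = pochhammer (- of_nat n) j * pochhammer c j / (fact j * pochhammer g j) *
         (pochhammer (1 + c - b) j * pochhammer (1 - b - of_nat n) j / pochhammer (1 + c - b - of_nat n) (2 * j))"
      unfolding hyp_term_def D[symmetric] using n1 n2 n3
      by (simp add: field_simps power_one_over)
    have e1: "1 + c - b - c - of_nat n = 1 - b - of_nat n" by simp
    have e2: "1 - (1 + c - b) = b - c" by simp
    have e3: "1 + c - (1 + c - b) = b" by simp
    have ad: "admissible_lower (1 + c - (1 + c - b))" using assms(3) by simp
    have KK: "pochhammer (1 + c - b) j * pochhammer (1 - b - of_nat n) j * pochhammer (b - c) n
       = pochhammer b n * pochhammer (1 + c - b - of_nat n) (2 * j) * G j b"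
      unfolding G_def using K[OF that ad] unfolding e1 e2 e3 .
    have T2: "pochhammer (b - c) n / pochhammer b n * (pochhammer (1 + c - b) j * pochhammer (1 - b - of_nat n) j / pochhammer (1 + c - b - of_nat n) (2 * j)) = G j b"
      using KK nD assms(8) by (simp add: field_simps)
    have T3: "pochhammer (- of_nat n) j * pochhammer c j / (fact j * pochhammer g j) * G j b = (\<Sum>k\<le>n. F g b j k)"
      unfolding G_def F_def by (rule E[OF that])
    have "pochhammer g n * pochhammer (b - c) n / (pochhammer (1 - a) n * pochhammer b n) *
           hyp_term [- of_nat n, 1 + c - b, 1 - b - of_nat n, c]
                     [(1 + c - b - of_nat n) / 2, (2 + c - b - of_nat n) / 2, g] (1/4) j
        = \<alpha> * (pochhammer (- of_nat n) j * pochhammer c j / (fact j * pochhammer g j) *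
            (pochhammer (b - c) n / pochhammer b n * (pochhammer (1 + c - b) j * pochhammer (1 - b - of_nat n) j / pochhammer (1 + c - b - of_nat n) (2 * j))))"
      unfolding T1 \<alpha>_def by (simp add: field_simps)
    also have "\<dots> = \<alpha> * (\<Sum>k\<le>n. F g b j k)" unfolding T2 T3 ..
    finally show ?thesis unfolding g_def .
  qed
  have "hypergeom [- of_nat n, a, a - c - of_nat n, c]
                   [(a - of_nat n) / 2, (1 + a - of_nat n) / 2, b] (1/4)
      = \<alpha> * (\<Sum>k\<le>n. \<Sum>j\<le>n. F b g k j)"
    unfolding fin by (subst sum_distrib_left, rule sum.cong) (auto simp: L)
  also have "(\<Sum>k\<le>n. \<Sum>j\<le>n. F b g k j) = (\<Sum>j\<le>n. \<Sum>k\<le>n. F g b j k)"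
    by (subst sum.swap) (simp add: F_def add.commute mult_ac)
  also have "\<alpha> * (\<Sum>j\<le>n. \<Sum>k\<le>n. F g b j k)
      = pochhammer (1 + c - a) n * pochhammer (b - c) n / (pochhammer (1 - a) n * pochhammer b n)
         * hypergeom [- of_nat n, 1 + c - b, 1 - b - of_nat n, c]
                     [(1 + c - b - of_nat n) / 2, (2 + c - b - of_nat n) / 2, 1 + c - a] (1/4)"
    unfolding fin sum_distrib_left by (rule sum.cong) (simp_all only: R sum_distrib_left atMost_iff)
  finally show ?thesis .
qed

end
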